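(* There exists a history-deterministic generalised coBüchi automaton $\mathcal{A}$ over an alphabet $\Sigma$ such that every history-deterministic generalised Büchi automaton recognising $\Sigma^\omega\setminus\mathcal{L}(\mathcal{A})$ has strictly more states than $\mathcal{A}$.
   Context: An automaton is a tuple $(Q,\Sigma,q_{\mathrm{init}},\Delta,\Gamma,\mathrm{col},W)$ with finite state set $Q$, finite input alphabet $\Sigma$, initial state, transitions $\Delta\subseteq Q\times\Sigma\times Q$, output alphabet $\Gamma$, labelling $\mathrm{col}:\Delta\to\Gamma$, acceptance condition $W\subseteq\Gamma^\omega$. A run on $w=a_1a_2\cdots$ is a sequence $(q_0,a_1,q_1)(q_1,a_2,q_2)\cdots$ of transitions with $q_0=q_{\mathrm{init}}$, accepting if its label sequence is in $W$; $\mathcal{L}(\mathcal{A})$ is the set of words having an accepting run. With a finite set $C$ of output colours and $\Gamma=2^C$: generalised Büchi means $W=\{x : \text{every } c\in C \text{ occurs in infinitely many letters of } x\}$; generalised coBüchi means $W=\{x : \text{some } c\in C \text{ occurs in only finitely many letters of } x\}$. A resolver is a map $\sigma:\Sigma^+\to\Delta$ such that for every $w=a_0a_1\cdots$, $\sigma(a_0)\sigma(a_0a_1)\cdots$ is a run on $w$, accepting whenever $w\in\mathcal{L}(\mathcal{A})$; an automaton is history-deterministic if it has a resolver. The number of states is $|Q|$. *)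

theory Defs
  imports Main
begin

(* The acceptance condition W is determined by the colour set C together with
   the kind of condition (generalised Buchi / generalised coBuchi), see below. *)
record ('q, 'a, 'c) automaton =
  states  :: "'q set"
  alphabet :: "'a set"
  initial :: "'q"
  trans   :: "('q \<times> 'a \<times> 'q) set"
  colours :: "'c set"
  col     :: "('q \<times> 'a \<times> 'q) \<Rightarrow> 'c set"

definition wf_automaton :: "('q, 'a, 'c) automaton \<Rightarrow> bool" where
  "wf_automaton A \<longleftrightarrow>
     finite (states A) \<and> finite (alphabet A) \<and> finite (colours A) \<and>
     initial A \<in> states A \<and>
     trans A \<subseteq> states A \<times> alphabet A \<times> states A \<and>
     (\<forall>t \<in> trans A. col A t \<subseteq> colours A)"

definition omega_words :: "'a set \<Rightarrow> (nat \<Rightarrow> 'a) set" where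
  "omega_words S = {w. \<forall>i. w i \<in> S}"

definition is_run :: "('q, 'a, 'c) automaton \<Rightarrow> (nat \<Rightarrow> 'a) \<Rightarrow> (nat \<Rightarrow> 'q \<times> 'a \<times> 'q) \<Rightarrow> bool" where
  "is_run A w r \<longleftrightarrow>
     (\<forall>i. r i \<in> trans A) \<and>
     fst (r 0) = initial A \<and>
     (\<forall>i. fst (snd (r i)) = w i) \<and>
     (\<forall>i. snd (snd (r i)) = fst (r (Suc i)))"

definition gen_buchi_acc :: "'c set \<Rightarrow> (nat \<Rightarrow> 'c set) \<Rightarrow> bool" where
  "gen_buchi_acc C x \<longleftrightarrow> (\<forall>c \<in> C. \<exists>\<^sub>\<infinity>i. c \<in> x i)"

definition gen_cobuchi_acc :: "'c set \<Rightarrow> (nat \<Rightarrow> 'c set) \<Rightarrow> bool" where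
  "gen_cobuchi_acc C x \<longleftrightarrow> (\<exists>c \<in> C. finite {i. c \<in> x i})"

definition accepting_run :: "('c set \<Rightarrow> (nat \<Rightarrow> 'c set) \<Rightarrow> bool) \<Rightarrow> ('q, 'a, 'c) automaton
     \<Rightarrow> (nat \<Rightarrow> 'q \<times> 'a \<times> 'q) \<Rightarrow> bool" where
  "accepting_run W A r \<longleftrightarrow> W (colours A) (\<lambda>i. col A (r i))"

definition lang :: "('c set \<Rightarrow> (nat \<Rightarrow> 'c set) \<Rightarrow> bool) \<Rightarrow> ('q, 'a, 'c) automaton \<Rightarrow> (nat \<Rightarrow> 'a) set" where
  "lang W A = {w \<in> omega_words (alphabet A). \<exists>r. is_run A w r \<and> accepting_run W A r}"

(* resolver sigma : Sigma^+ -> Delta, finite nonempty words as lists;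
   the i-th transition is sigma applied to the prefix a_0 ... a_i *)
definition is_resolver :: "('c set \<Rightarrow> (nat \<Rightarrow> 'c set) \<Rightarrow> bool) \<Rightarrow> ('q, 'a, 'c) automaton
     \<Rightarrow> ('a list \<Rightarrow> 'q \<times> 'a \<times> 'q) \<Rightarrow> bool" where
  "is_resolver W A \<sigma> \<longleftrightarrow>
     (\<forall>w \<in> omega_words (alphabet A).
        let r = (\<lambda>i. \<sigma> (map w [0..<Suc i])) in
        is_run A w r \<and> (w \<in> lang W A \<longrightarrow> accepting_run W A r))"

definition history_deterministic :: "('c set \<Rightarrow> (nat \<Rightarrow> 'c set) \<Rightarrow> bool) \<Rightarrow> ('q, 'a, 'c) automaton \<Rightarrow> bool" where
  "history_deterministic W A \<longleftrightarrow> (\<exists>\<sigma>. is_resolver W A \<sigma>)"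

end

theory Submission
  imports Defs "HOL-Library.Infinite_Set"
begin


definition infab :: "(nat \<Rightarrow> nat) \<Rightarrow> bool" where
  "infab w \<longleftrightarrow> (\<forall>N. \<exists>i\<ge>N. w i = 0 \<and> w (Suc i) = 1)"
definition infba :: "(nat \<Rightarrow> nat) \<Rightarrow> bool" where
  "infba w \<longleftrightarrow> (\<forall>N. \<exists>i\<ge>N. w i = 1 \<and> w (Suc i) = 0)"

definition c1safe :: "nat \<times> nat \<times> nat \<Rightarrow> bool" where
  "c1safe t = (case t of (s,x,s') \<Rightarrow> (x=0 \<and> s'=0) \<or> (x=1 \<and> s=1 \<and> s'=1) \<or> (x \<noteq> 0 \<and> x \<noteq> 1 \<and> s'=1))"
definition c2safe :: "nat \<times> nat \<times> nat \<Rightarrow> bool" where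
  "c2safe t = (case t of (s,x,s') \<Rightarrow> (x=1 \<and> s'=0) \<or> (x=0 \<and> s=1 \<and> s'=1) \<or> (x \<noteq> 0 \<and> x \<noteq> 1 \<and> s'=1))"
definition colA :: "nat \<times> nat \<times> nat \<Rightarrow> nat set" where
  "colA t = (if c1safe t then {} else {1}) \<union> (if c2safe t then {} else {2})"

definition AutA :: "(nat,nat,nat) automaton" where
  "AutA = \<lparr>states = {0,1}, alphabet = {0,1,2}, initial = 1,
           trans = {0,1} \<times> {0,1,2} \<times> {0,1}, colours = {1,2}, col = colA\<rparr>"

definition stp :: "bool \<times> nat \<Rightarrow> nat \<Rightarrow> bool \<times> nat" where
  "stp c x = (let bt = fst c; s = snd c;
      bt' = (if bt \<and> s = 0 \<and> x = 1 then False else if \<not> bt \<and> s = 0 \<and> x = 0 then True else bt)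
    in (bt', if bt' then (if x = 0 then 0 else 1) else (if x = 1 then 0 else 1)))"

primrec cfgs :: "(nat \<Rightarrow> nat) \<Rightarrow> nat \<Rightarrow> bool \<times> nat" where
  "cfgs w 0 = (True, 1)"
| "cfgs w (Suc i) = stp (cfgs w i) (w i)"

definition sigA :: "nat list \<Rightarrow> nat \<times> nat \<times> nat" where
  "sigA ys = (snd (foldl stp (True,1) (butlast ys)), last ys, snd (foldl stp (True,1) ys))"

lemma AutA_simps[simp]: "states AutA = {0,1}" "alphabet AutA = {0,1,2}" "initial AutA = 1"
  "trans AutA = {0,1} \<times> {0,1,2} \<times> {0,1}" "colours AutA = {1,2}" "col AutA = colA"
  by (simp_all add: AutA_def)

lemma foldl_cfgs: "foldl stp (True,1) (map w [0..<i]) = cfgs w i"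
  by (induction i) auto

lemma sigA_app: "sigA (xs @ [x]) = (snd (foldl stp (True,1) xs), x, snd (stp (foldl stp (True,1) xs) x))"
  by (simp add: sigA_def)

lemma sigA_run: "sigA (map w [0..<Suc i]) = (snd (cfgs w i), w i, snd (cfgs w (Suc i)))"
  using sigA_app[of "map w [0..<i]" "w i"] foldl_cfgs[of w i] by simp

lemma cfgs_s01: "snd (cfgs w i) \<in> {0,1}"
  by (cases i) (auto simp: stp_def Let_def)

lemma cfgs_cons: "snd (cfgs w (Suc j)) = 0 \<longleftrightarrow>
   (if fst (cfgs w (Suc j)) then w j = 0 else w j = 1)"
  by (auto simp: stp_def Let_def)

lemma K1: "fst (cfgs w i) \<Longrightarrow> fst (cfgs w (Suc i)) \<Longrightarrow>
   c1safe (snd (cfgs w i), w i, snd (cfgs w (Suc i)))"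
  using cfgs_s01[of w i]
  by (auto simp: stp_def Let_def c1safe_def split: if_splits)

lemma K2: "\<not> fst (cfgs w i) \<Longrightarrow> \<not> fst (cfgs w (Suc i)) \<Longrightarrow>
   c2safe (snd (cfgs w i), w i, snd (cfgs w (Suc i)))"
  using cfgs_s01[of w i]
  by (auto simp: stp_def Let_def c2safe_def split: if_splits)

lemma sw1: "fst (cfgs w i) \<Longrightarrow> \<not> fst (cfgs w (Suc i)) \<Longrightarrow>
   \<exists>j. i = Suc j \<and> w j = 0 \<and> w i = 1"
proof -
  assume a: "fst (cfgs w i)" "\<not> fst (cfgs w (Suc i))"
  then have s0: "snd (cfgs w i) = 0" and x: "w i = 1"
    by (auto simp: stp_def Let_def split: if_splits)
  show ?thesis
  proof (cases i)
    case 0 then show ?thesis using s0 by simp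
  next
    case (Suc j)
    then show ?thesis using s0 a(1) x cfgs_cons[of w j] by auto
  qed
qed

lemma sw2: "\<not> fst (cfgs w i) \<Longrightarrow> fst (cfgs w (Suc i)) \<Longrightarrow>
   \<exists>j. i = Suc j \<and> w j = 1 \<and> w i = 0"
proof -
  assume a: "\<not> fst (cfgs w i)" "fst (cfgs w (Suc i))"
  then have s0: "snd (cfgs w i) = 0" and x: "w i = 0"
    by (auto simp: stp_def Let_def split: if_splits)
  show ?thesis
  proof (cases i)
    case 0 then show ?thesis using a(1) by simp
  next
    case (Suc j)
    then show ?thesis using s0 a(1) x cfgs_cons[of w j] by auto
  qed
qed

definition rA :: "(nat \<Rightarrow> nat) \<Rightarrow> nat \<Rightarrow> nat \<times> nat \<times> nat" where
  "rA w i = (snd (cfgs w i), w i, snd (cfgs w (Suc i)))"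

lemma fin_le: "(\<And>i. P i \<Longrightarrow> i < M) \<Longrightarrow> finite {i::nat. P i}"
  by (rule finite_subset[of _ "{..<M}"]) auto

lemma eventually_const:
  assumes "\<And>i. i \<ge> M \<Longrightarrow> fst (cfgs w i) \<Longrightarrow> fst (cfgs w (Suc i))"
  shows "finite {i. 1 \<in> colA (rA w i)} \<or> finite {i. 2 \<in> colA (rA w i)}"
proof (cases "\<exists>i0\<ge>M. fst (cfgs w i0)")
  case True
  then obtain i0 where i0: "i0 \<ge> M" "fst (cfgs w i0)" by blast
  have all: "fst (cfgs w (i0 + k))" for k
    by (induction k) (use i0 assms in auto)
  have "finite {i. 1 \<in> colA (rA w i)}"
  proof (rule fin_le[of _ i0])
    fix i assume h: "1 \<in> colA (rA w i)"
    show "i < i0"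
    proof (rule ccontr)
      assume "\<not> i < i0"
      then obtain k where "i = i0 + k" by (metis le_add_diff_inverse not_less)
      then have "fst (cfgs w i)" "fst (cfgs w (Suc i))" using all[of k] all[of "Suc k"] by auto
      then have "c1safe (rA w i)" using K1 rA_def by simp
      then show False using h by (simp add: colA_def split: if_splits)
    qed
  qed
  then show ?thesis ..
next
  case False
  have "finite {i. 2 \<in> colA (rA w i)}"
  proof (rule fin_le[of _ M])
    fix i assume h: "2 \<in> colA (rA w i)"
    show "i < M"
    proof (rule ccontr)
      assume "\<not> i < M"
      then have "\<not> fst (cfgs w i)" "\<not> fst (cfgs w (Suc i))" using False by (auto simp del: cfgs.simps)
      then have "c2safe (rA w i)" using K2 rA_def by simp
      then show False using h by (simp add: colA_def split: if_splits)
    qed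
  qed
  then show ?thesis ..
qed

lemma eventually_const2:
  assumes "\<And>i. i \<ge> M \<Longrightarrow> \<not> fst (cfgs w i) \<Longrightarrow> \<not> fst (cfgs w (Suc i))"
  shows "finite {i. 1 \<in> colA (rA w i)} \<or> finite {i. 2 \<in> colA (rA w i)}"
proof (cases "\<exists>i0\<ge>M. \<not> fst (cfgs w i0)")
  case True
  then obtain i0 where i0: "i0 \<ge> M" "\<not> fst (cfgs w i0)" by blast
  have all: "\<not> fst (cfgs w (i0 + k))" for k
    by (induction k) (use i0 assms in auto)
  have "finite {i. 2 \<in> colA (rA w i)}"
  proof (rule fin_le[of _ i0])
    fix i assume h: "2 \<in> colA (rA w i)"
    show "i < i0"
    proof (rule ccontr)
      assume "\<not> i < i0"
      then obtain k where "i = i0 + k" by (metis le_add_diff_inverse not_less)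
      then have "\<not> fst (cfgs w i)" "\<not> fst (cfgs w (Suc i))" using all[of k] all[of "Suc k"] by auto
      then have "c2safe (rA w i)" using K2 rA_def by simp
      then show False using h by (simp add: colA_def split: if_splits)
    qed
  qed
  then show ?thesis ..
next
  case False
  have "finite {i. 1 \<in> colA (rA w i)}"
  proof (rule fin_le[of _ M])
    fix i assume h: "1 \<in> colA (rA w i)"
    show "i < M"
    proof (rule ccontr)
      assume "\<not> i < M"
      then have "fst (cfgs w i)" "fst (cfgs w (Suc i))" using False by (auto simp del: cfgs.simps)
      then have "c1safe (rA w i)" using K1 rA_def by simp
      then show False using h by (simp add: colA_def split: if_splits)
    qed
  qed
  then show ?thesis ..
qed

lemma A_acc:
  assumes "\<not> (infab w \<and> infba w)"
  shows "finite {i. 1 \<in> colA (rA w i)} \<or> finite {i. 2 \<in> colA (rA w i)}"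
proof (cases "infab w")
  case False
  then obtain N where N: "\<And>i. i \<ge> N \<Longrightarrow> \<not> (w i = 0 \<and> w (Suc i) = 1)"
    unfolding infab_def by blast
  show ?thesis
  proof (rule eventually_const[of "Suc N"])
    fix i assume "i \<ge> Suc N" "fst (cfgs w i)"
    then show "fst (cfgs w (Suc i))" using sw1[of w i] N by fastforce
  qed
next
  case True
  then have "\<not> infba w" using assms by blast
  then obtain N where N: "\<And>i. i \<ge> N \<Longrightarrow> \<not> (w i = 1 \<and> w (Suc i) = 0)"
    unfolding infba_def by blast
  show ?thesis
  proof (rule eventually_const2[of "Suc N"])
    fix i assume "i \<ge> Suc N" "\<not> fst (cfgs w i)"
    then show "\<not> fst (cfgs w (Suc i))" using sw2[of w i] N by fastforce
  qed
qed

lemma run_parts: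
  assumes "is_run A w r"
  shows "r i = (fst (r i), w i, fst (r (Suc i)))"
  using assms unfolding is_run_def by (metis prod.collapse)

lemma A_rej:
  assumes r: "is_run AutA w r" and ab: "infab w" and ba: "infba w"
  shows "\<not> accepting_run gen_cobuchi_acc AutA r"
proof -
  have inf1: "infinite {i. 1 \<in> col AutA (r i)}"
  proof -
    have "\<forall>N. \<exists>i\<ge>N. 1 \<in> col AutA (r i)"
    proof
      fix N
      obtain i where i: "i \<ge> N" "w i = 0" "w (Suc i) = 1" using ab unfolding infab_def by blast
      obtain s0 s1 s2 where e1: "r i = (s0, 0, s1)" and e2: "r (Suc i) = (s1, 1, s2)"
        using run_parts[OF r, of i] run_parts[OF r, of "Suc i"] i by metis
      have "1 \<in> col AutA (r i) \<or> 1 \<in> col AutA (r (Suc i))"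
        unfolding e1 e2 by (auto simp:  colA_def c1safe_def)
      then show "\<exists>i\<ge>N. 1 \<in> col AutA (r i)" using i(1) le_SucI by blast
    qed
    then show ?thesis using infinite_nat_iff_unbounded_le by auto
  qed
  have inf2: "infinite {i. 2 \<in> col AutA (r i)}"
  proof -
    have "\<forall>N. \<exists>i\<ge>N. 2 \<in> col AutA (r i)"
    proof
      fix N
      obtain i where i: "i \<ge> N" "w i = 1" "w (Suc i) = 0" using ba unfolding infba_def by blast
      obtain s0 s1 s2 where e1: "r i = (s0, 1, s1)" and e2: "r (Suc i) = (s1, 0, s2)"
        using run_parts[OF r, of i] run_parts[OF r, of "Suc i"] i by metis
      have "2 \<in> col AutA (r i) \<or> 2 \<in> col AutA (r (Suc i))"
        unfolding e1 e2 by (auto simp:  colA_def c2safe_def)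
      then show "\<exists>i\<ge>N. 2 \<in> col AutA (r i)" using i(1) le_SucI by blast
    qed
    then show ?thesis using infinite_nat_iff_unbounded_le by auto
  qed
  show ?thesis using inf1 inf2
    by (auto simp: accepting_run_def gen_cobuchi_acc_def )
qed

lemma rA_run: "w \<in> omega_words {0,1,2} \<Longrightarrow> is_run AutA w (rA w)"
proof -
  assume w: "w \<in> omega_words {0,1,2}"
  have "rA w i \<in> trans AutA" for i
  proof -
    have "snd (cfgs w i) \<in> {0,1}" "snd (cfgs w (Suc i)) \<in> {0,1}" "w i \<in> {0,1,2}"
      using cfgs_s01[of w i] cfgs_s01[of w "Suc i"] w by (simp_all add: omega_words_def del: cfgs.simps)
    then show ?thesis unfolding rA_def AutA_simps by blast
  qed
  then have "\<forall>i. rA w i \<in> trans AutA" by blast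
  moreover have "fst (rA w 0) = initial AutA" by (simp add: rA_def)
  moreover have "\<forall>i. fst (snd (rA w i)) = w i" by (simp add: rA_def del: cfgs.simps)
  moreover have "\<forall>i. snd (snd (rA w i)) = fst (rA w (Suc i))" by (simp add: rA_def del: cfgs.simps)
  ultimately show ?thesis unfolding is_run_def by blast
qed

lemma langA: "lang gen_cobuchi_acc AutA = {w \<in> omega_words {0,1,2}. \<not> (infab w \<and> infba w)}"
proof (intro set_eqI iffI)
  fix w assume "w \<in> lang gen_cobuchi_acc AutA"
  then obtain r where "w \<in> omega_words {0,1,2}" "is_run AutA w r" "accepting_run gen_cobuchi_acc AutA r"
    by (auto simp: lang_def )
  then show "w \<in> {w \<in> omega_words {0,1,2}. \<not> (infab w \<and> infba w)}" using A_rej by blast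
next
  fix w assume h: "w \<in> {w \<in> omega_words {0,1,2}. \<not> (infab w \<and> infba w)}"
  then have "accepting_run gen_cobuchi_acc AutA (rA w)"
    using A_acc[of w] by (auto simp: accepting_run_def gen_cobuchi_acc_def )
  then show "w \<in> lang gen_cobuchi_acc AutA" using h rA_run by (auto simp: lang_def )
qed

lemma A_wf: "wf_automaton AutA"
  by (auto simp: wf_automaton_def  colA_def)

lemma A_hd: "history_deterministic gen_cobuchi_acc AutA"
proof -
  have "is_resolver gen_cobuchi_acc AutA sigA"
    unfolding is_resolver_def
  proof (intro ballI)
    fix w assume w: "w \<in> omega_words (alphabet AutA)"
    have eq: "(\<lambda>i. sigA (map w [0..<Suc i])) = rA w"
      by (rule ext) (simp only: sigA_run rA_def)
    have wo: "w \<in> omega_words {0,1,2}" using w by simp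
    show "let r = \<lambda>i. sigA (map w [0..<Suc i]) in is_run AutA w r \<and>
            (w \<in> lang gen_cobuchi_acc AutA \<longrightarrow> accepting_run gen_cobuchi_acc AutA r)"
      unfolding Let_def eq
    proof (intro conjI impI)
      show "is_run AutA w (rA w)" using rA_run[OF wo] .
      assume "w \<in> lang gen_cobuchi_acc AutA"
      then have "\<not> (infab w \<and> infba w)" unfolding langA by blast
      then have "finite {i. 1 \<in> colA (rA w i)} \<or> finite {i. 2 \<in> colA (rA w i)}" by (rule A_acc)
      then show "accepting_run gen_cobuchi_acc AutA (rA w)"
        by (auto simp: accepting_run_def gen_cobuchi_acc_def )
    qed
  qed
  then show ?thesis by (auto simp: history_deterministic_def)
qed



lemma card2_eq: "finite S \<Longrightarrow> card S \<le> 2 \<Longrightarrow> a \<in> S \<Longrightarrow> b \<in> S \<Longrightarrow> a \<noteq> b \<Longrightarrow> S = {a,b}"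
proof -
  assume h: "finite S" "card S \<le> 2" "a \<in> S" "b \<in> S" "a \<noteq> b"
  have "{a,b} \<subseteq> S" using h by auto
  moreover have "card {a,b} = 2" using h by simp
  moreover have "card S = 2" using h card_mono[OF h(1) \<open>{a,b} \<subseteq> S\<close>] \<open>card {a,b} = 2\<close> by simp
  ultimately have "{a,b} = S" using h card_subset_eq[of S "{a,b}"] by simp
  then show ?thesis by simp
qed

definition ins_w :: "nat \<Rightarrow> nat \<Rightarrow> (nat \<Rightarrow> nat) \<Rightarrow> nat \<Rightarrow> nat" where
  "ins_w \<alpha> \<beta> lt n = (if n mod 4 = 0 then \<alpha> else if n mod 4 = 1 then 2
      else if n mod 4 = 2 then lt (n div 4) else \<beta>)"

definition ins_r :: "(nat \<Rightarrow> 'q \<times> nat \<times> 'q) \<Rightarrow> (nat \<Rightarrow> 'q) \<Rightarrow> (nat \<Rightarrow> nat) \<Rightarrow> nat \<Rightarrow> 'q \<times> nat \<times> 'q" where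
  "ins_r \<rho> Z lt n = (let k = n div 4; x = snd (snd (\<rho> (2*k))) in
     if n mod 4 = 0 then \<rho> (2*k) else if n mod 4 = 1 then (x, 2, Z k)
     else if n mod 4 = 2 then (Z k, lt k, x) else \<rho> (2*k+1))"

lemma four_cases: "(\<And>k. P (4*k)) \<Longrightarrow> (\<And>k. P (4*k+1)) \<Longrightarrow> (\<And>k. P (4*k+2)) \<Longrightarrow> (\<And>k. P (4*k+3)) \<Longrightarrow> P (n::nat)"
proof -
  assume a: "\<And>k. P (4*k)" "\<And>k. P (4*k+1)" "\<And>k. P (4*k+2)" "\<And>k. P (4*k+3)"
  have n: "n = 4 * (n div 4) + n mod 4" by simp
  have "n mod 4 = 0 \<or> n mod 4 = 1 \<or> n mod 4 = 2 \<or> n mod 4 = 3" by presburger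
  then show ?thesis using a n by (metis add.right_neutral)
qed

lemma dm: "(4*k+1) div 4 = (k::nat)" "(4*k+1) mod 4 = (1::nat)"
  "(4*k+2) div 4 = (k::nat)" "(4*k+2) mod 4 = (2::nat)"
  "(4*k+3) div 4 = (k::nat)" "(4*k+3) mod 4 = (3::nat)"
  "(4*k) div 4 = (k::nat)" "(4*k) mod 4 = (0::nat)"
  by presburger+

lemma iw0: "ins_w \<alpha> \<beta> lt (4*k) = \<alpha>" unfolding ins_w_def dm by simp
lemma iw1: "ins_w \<alpha> \<beta> lt (4*k+1) = 2" unfolding ins_w_def dm by simp
lemma iw2: "ins_w \<alpha> \<beta> lt (4*k+2) = lt k" unfolding ins_w_def dm by simp
lemma iw3: "ins_w \<alpha> \<beta> lt (4*k+3) = \<beta>" unfolding ins_w_def dm by simp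
lemma ir0: "ins_r \<rho> Z lt (4*k) = \<rho> (2*k)" unfolding ins_r_def Let_def dm by simp
lemma ir1: "ins_r \<rho> Z lt (4*k+1) = (snd (snd (\<rho> (2*k))), 2, Z k)" unfolding ins_r_def Let_def dm by simp
lemma ir2: "ins_r \<rho> Z lt (4*k+2) = (Z k, lt k, snd (snd (\<rho> (2*k))))" unfolding ins_r_def Let_def dm by simp
lemma ir3: "ins_r \<rho> Z lt (4*k+3) = \<rho> (2*k+1)" unfolding ins_r_def Let_def dm by simp

lemma ins_run:
  assumes w1: "\<And>i. w1 i = (if even i then \<alpha> else \<beta>)"
    and run: "is_run B w1 \<rho>"
    and patch: "\<And>k. (snd (snd (\<rho> (2*k))), 2, Z k) \<in> trans B \<and> (Z k, lt k, snd (snd (\<rho> (2*k)))) \<in> trans B"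
  shows "is_run B (ins_w \<alpha> \<beta> lt) (ins_r \<rho> Z lt)"
proof -
  have rt: "\<rho> i \<in> trans B" "fst (snd (\<rho> i)) = w1 i" "snd (snd (\<rho> i)) = fst (\<rho> (Suc i))" for i
    using run unfolding is_run_def by auto
  have T: "ins_r \<rho> Z lt n \<in> trans B" for n
    by (rule four_cases[of _ n]) (simp_all only: ir0 ir1 ir2 ir3 rt(1) patch)
  have L: "fst (snd (ins_r \<rho> Z lt n)) = ins_w \<alpha> \<beta> lt n" for n
    by (rule four_cases[of _ n], simp_all only: ir0 ir1 ir2 ir3 iw0 iw1 iw2 iw3; simp add: rt w1)
  have C: "snd (snd (ins_r \<rho> Z lt n)) = fst (ins_r \<rho> Z lt (Suc n))" for n
  proof (rule four_cases[of _ n])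
    fix k
    show "snd (snd (ins_r \<rho> Z lt (4*k))) = fst (ins_r \<rho> Z lt (Suc (4*k)))"
      using ir0[of \<rho> Z lt k] ir1[of \<rho> Z lt k] by simp
    show "snd (snd (ins_r \<rho> Z lt (4*k+1))) = fst (ins_r \<rho> Z lt (Suc (4*k+1)))"
      using ir1[of \<rho> Z lt k] ir2[of \<rho> Z lt k] by simp
    show "snd (snd (ins_r \<rho> Z lt (4*k+2))) = fst (ins_r \<rho> Z lt (Suc (4*k+2)))"
    proof -
      have e: "Suc (4*k+2) = 4*k+3" by simp
      show ?thesis unfolding e ir2 ir3 using rt(3)[of "2*k"] by simp
    qed
    have "Suc (4*k+3) = 4*(Suc k)" by simp
    then show "snd (snd (ins_r \<rho> Z lt (4*k+3))) = fst (ins_r \<rho> Z lt (Suc (4*k+3)))"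
      using ir3[of \<rho> Z lt k] ir0[of \<rho> Z lt "Suc k"] rt(3)[of "2*k+1"] by simp
  qed
  have I: "fst (ins_r \<rho> Z lt 0) = initial B"
    using ir0[of \<rho> Z lt 0] run unfolding is_run_def by simp
  show ?thesis unfolding is_run_def using T L C I by blast
qed

lemma ins_acc:
  assumes acc: "accepting_run gen_buchi_acc B \<rho>"
  shows "accepting_run gen_buchi_acc B (ins_r \<rho> Z lt)"
  unfolding accepting_run_def gen_buchi_acc_def
proof
  fix c assume c: "c \<in> colours B"
  have "\<exists>\<^sub>\<infinity>i. c \<in> col B (\<rho> i)" using acc c unfolding accepting_run_def gen_buchi_acc_def by blast
  then have inf: "\<forall>m. \<exists>i\<ge>m. c \<in> col B (\<rho> i)" unfolding INFM_nat_le .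
  have "\<forall>m. \<exists>n\<ge>m. c \<in> col B (ins_r \<rho> Z lt n)"
  proof
    fix m
    obtain i where i: "i \<ge> m" "c \<in> col B (\<rho> i)" using inf by blast
    show "\<exists>n\<ge>m. c \<in> col B (ins_r \<rho> Z lt n)"
    proof (cases "even i")
      case True
      then obtain k where k: "i = 2*k" by blast
      then show ?thesis using i ir0[of \<rho> Z lt k] by (intro exI[of _ "4*k"]) auto
    next
      case False
      then obtain k where k: "i = 2*k+1" using oddE by blast
      then show ?thesis using i ir3[of \<rho> Z lt k] by (intro exI[of _ "4*k+3"]) auto
    qed
  qed
  then show "\<exists>\<^sub>\<infinity>i. c \<in> col B (ins_r \<rho> Z lt i)" unfolding INFM_nat_le .
qed

lemma ins_nopat:
  assumes "\<alpha> \<noteq> 2" "\<beta> \<noteq> 2" "\<alpha> \<noteq> \<beta>" "\<And>k. lt k \<noteq> \<alpha>"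
  shows "\<not> (ins_w \<alpha> \<beta> lt i = \<alpha> \<and> ins_w \<alpha> \<beta> lt (Suc i) = \<beta>)"
proof (rule four_cases[of _ i])
  fix k
  show "\<not> (ins_w \<alpha> \<beta> lt (4*k) = \<alpha> \<and> ins_w \<alpha> \<beta> lt (Suc (4*k)) = \<beta>)"
    using iw1[of \<alpha> \<beta> lt k] assms by simp
  show "\<not> (ins_w \<alpha> \<beta> lt (4*k+1) = \<alpha> \<and> ins_w \<alpha> \<beta> lt (Suc (4*k+1)) = \<beta>)"
    using iw1[of \<alpha> \<beta> lt k] assms by simp
  show "\<not> (ins_w \<alpha> \<beta> lt (4*k+2) = \<alpha> \<and> ins_w \<alpha> \<beta> lt (Suc (4*k+2)) = \<beta>)"
    using iw2[of \<alpha> \<beta> lt k] assms by simp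
  show "\<not> (ins_w \<alpha> \<beta> lt (4*k+3) = \<alpha> \<and> ins_w \<alpha> \<beta> lt (Suc (4*k+3)) = \<beta>)"
    using iw3[of \<alpha> \<beta> lt k] assms by simp
qed



definition wol :: "nat list \<Rightarrow> nat \<Rightarrow> nat \<Rightarrow> nat" where
  "wol zs x i = (if i < length zs then zs ! i else x)"

lemma wol_map: "map (wol zs x) [0..<length zs] = zs"
  by (rule nth_equalityI) (auto simp: wol_def)

lemma wol_omega: "set zs \<subseteq> {0,1,2} \<Longrightarrow> x \<in> {0,1,2} \<Longrightarrow> wol zs x \<in> omega_words {0,1,2}"
proof -
  assume zs: "set zs \<subseteq> {0,1,2}" and x: "x \<in> {0,1,2}"
  have "wol zs x i \<in> {0,1,2}" for i
  proof (cases "i < length zs")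
    case True
    have "zs ! i \<in> {0,1,2}" using subsetD[OF zs nth_mem[OF True]] .
    then show ?thesis using True unfolding wol_def by simp
  next
    case False
    then show ?thesis using x unfolding wol_def by simp
  qed
  then show ?thesis unfolding omega_words_def by blast
qed

lemma run_parts': "is_run A w r \<Longrightarrow> r i = (fst (r i), w i, snd (snd (r i)))"
  unfolding is_run_def by (metis prod.collapse)

context
  fixes B :: "(nat,nat,nat) automaton" and \<sigma> :: "nat list \<Rightarrow> nat \<times> nat \<times> nat"
  assumes wfB: "wf_automaton B" and alB: "alphabet B = {0,1,2}"
    and resB: "is_resolver gen_buchi_acc B \<sigma>"
    and langB: "lang gen_buchi_acc B = {w \<in> omega_words {0,1,2}. infab w \<and> infba w}"
begin

definition rr :: "(nat \<Rightarrow> nat) \<Rightarrow> nat \<Rightarrow> nat \<times> nat \<times> nat" where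
  "rr w i = \<sigma> (map w [0..<Suc i])"

lemma res_w: "w \<in> omega_words {0,1,2} \<Longrightarrow>
   is_run B w (rr w) \<and> (w \<in> lang gen_buchi_acc B \<longrightarrow> accepting_run gen_buchi_acc B (rr w))"
proof -
  assume w: "w \<in> omega_words {0,1,2}"
  have e: "(\<lambda>i. \<sigma> (map w [0..<Suc i])) = rr w" by (rule ext) (simp only: rr_def)
  have "w \<in> omega_words (alphabet B)" using alB w by simp
  then have "let r = (\<lambda>i. \<sigma> (map w [0..<Suc i])) in is_run B w r \<and>
        (w \<in> lang gen_buchi_acc B \<longrightarrow> accepting_run gen_buchi_acc B r)"
    by (rule bspec[OF resB[unfolded is_resolver_def]])
  then show ?thesis unfolding Let_def e .
qed

lemma rr_run: "w \<in> omega_words {0,1,2} \<Longrightarrow> is_run B w (rr w)"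
  using res_w by blast

lemma rr_acc: "w \<in> omega_words {0,1,2} \<Longrightarrow> infab w \<Longrightarrow> infba w \<Longrightarrow> accepting_run gen_buchi_acc B (rr w)"
proof -
  assume h: "w \<in> omega_words {0,1,2}" "infab w" "infba w"
  then have "w \<in> lang gen_buchi_acc B" using langB by simp
  then show ?thesis using res_w[OF h(1)] by blast
qed

lemma B_sound: "w \<in> omega_words {0,1,2} \<Longrightarrow> is_run B w r \<Longrightarrow> accepting_run gen_buchi_acc B r \<Longrightarrow> infab w \<and> infba w"
proof -
  assume h: "w \<in> omega_words {0,1,2}" "is_run B w r" "accepting_run gen_buchi_acc B r"
  have "w \<in> omega_words (alphabet B)" using alB h(1) by simp
  then have "w \<in> lang gen_buchi_acc B" unfolding lang_def using h(2,3) by blast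
  then show ?thesis using langB by simp
qed

definition after :: "nat list \<Rightarrow> nat" where
  "after zs = (if zs = [] then initial B else snd (snd (\<sigma> zs)))"

definition reached :: "nat \<Rightarrow> bool" where
  "reached q \<longleftrightarrow> (\<exists>zs. set zs \<subseteq> {0,1,2} \<and> q = after zs)"

lemma rr_after: "w \<in> omega_words {0,1,2} \<Longrightarrow> fst (rr w n) = after (map w [0..<n])"
proof (cases n)
  case 0
  assume "w \<in> omega_words {0,1,2}"
  then show ?thesis using rr_run 0 unfolding is_run_def after_def by simp
next
  case (Suc m)
  assume w: "w \<in> omega_words {0,1,2}"
  have "fst (rr w n) = snd (snd (rr w m))" using rr_run[OF w] Suc unfolding is_run_def by simp
  also have "\<dots> = after (map w [0..<n])" using Suc by (simp add: rr_def after_def del: upt_Suc)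
  finally show ?thesis .
qed

lemma rr_reached: "w \<in> omega_words {0,1,2} \<Longrightarrow> reached (snd (snd (rr w i)))"
proof -
  assume w: "w \<in> omega_words {0,1,2}"
  have wi: "w j \<in> {0,1,2}" for j using w unfolding omega_words_def by blast
  have "set (map w [0..<Suc i]) \<subseteq> {0,1,2}" by (simp only: set_map) (rule image_subsetI, rule wi)
  moreover have "snd (snd (rr w i)) = after (map w [0..<Suc i])"
    by (simp add: rr_def after_def del: upt_Suc)
  ultimately show ?thesis unfolding reached_def by blast
qed

lemma reached_step: "reached q \<Longrightarrow> x \<in> {0,1,2} \<Longrightarrow> \<exists>q'. (q,x,q') \<in> trans B \<and> reached q'"
proof -
  assume q: "reached q" and x: "x \<in> {0,1,2}"
  then obtain zs where zs: "set zs \<subseteq> {0,1,2}" "q = after zs" unfolding reached_def by blast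
  define w where "w = wol zs x"
  have w: "w \<in> omega_words {0,1,2}" using wol_omega[OF zs(1) x] w_def by simp
  define n where "n = length zs"
  have r: "is_run B w (rr w)" using rr_run[OF w] .
  have e: "rr w n = (fst (rr w n), w n, snd (snd (rr w n)))" using run_parts'[OF r] .
  have f: "fst (rr w n) = q" using rr_after[OF w, of n] wol_map[of zs x] zs(2) w_def n_def by simp
  have g: "w n = x" by (simp add: w_def wol_def n_def)
  have "rr w n \<in> trans B" using r unfolding is_run_def by simp
  then have "(q, x, snd (snd (rr w n))) \<in> trans B" using e f g by simp
  moreover have "reached (snd (snd (rr w n)))" using rr_reached[OF w] .
  ultimately show ?thesis by blast
qed

lemma reached_states: "reached q \<Longrightarrow> q \<in> states B"
proof -
  assume "reached q"
  then obtain q' where "(q,0,q') \<in> trans B" using reached_step by blast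
  then show ?thesis using wfB unfolding wf_automaton_def by auto
qed

lemma alt_omega: "\<alpha> \<in> {0,1} \<Longrightarrow> \<beta> \<in> {0,1} \<Longrightarrow> (\<lambda>i. if even i then \<alpha> else \<beta>) \<in> omega_words {0,1,2}"
  by (auto simp: omega_words_def)

lemma alt_inf: assumes "\<alpha> \<in> {0,1::nat}" "\<beta> \<in> {0,1}" "\<alpha> \<noteq> \<beta>"
  shows "infab (\<lambda>i. if even i then \<alpha> else \<beta>) \<and> infba (\<lambda>i. if even i then \<alpha> else \<beta>)"
proof -
  have c: "\<alpha> = 0 \<and> \<beta> = 1 \<or> \<alpha> = 1 \<and> \<beta> = 0" using assms by auto
  have ev: "\<exists>i\<ge>N. (if even i then \<alpha> else \<beta>) = \<alpha> \<and> (if even (Suc i) then \<alpha> else \<beta>) = \<beta>" for N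
    by (rule exI[of _ "2*N"]) simp
  have od: "\<exists>i\<ge>N. (if even i then \<alpha> else \<beta>) = \<beta> \<and> (if even (Suc i) then \<alpha> else \<beta>) = \<alpha>" for N
    by (rule exI[of _ "2*N+1"]) simp
  from c show ?thesis
  proof
    assume h: "\<alpha> = 0 \<and> \<beta> = 1"
    show ?thesis unfolding infab_def infba_def
    proof (intro conjI allI)
      fix N
      show "\<exists>i\<ge>N. (if even i then \<alpha> else \<beta>) = 0 \<and> (if even (Suc i) then \<alpha> else \<beta>) = 1"
        using ev[of N] h by simp
      show "\<exists>i\<ge>N. (if even i then \<alpha> else \<beta>) = 1 \<and> (if even (Suc i) then \<alpha> else \<beta>) = 0"
        using od[of N] h by simp
    qed
  next
    assume h: "\<alpha> = 1 \<and> \<beta> = 0"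
    show ?thesis unfolding infab_def infba_def
    proof (intro conjI allI)
      fix N
      show "\<exists>i\<ge>N. (if even i then \<alpha> else \<beta>) = 0 \<and> (if even (Suc i) then \<alpha> else \<beta>) = 1"
        using od[of N] h by simp
      show "\<exists>i\<ge>N. (if even i then \<alpha> else \<beta>) = 1 \<and> (if even (Suc i) then \<alpha> else \<beta>) = 0"
        using ev[of N] h by simp
    qed
  qed
qed

lemma ins_contra:
  assumes ab: "\<alpha> \<in> {0,1}" "\<beta> \<in> {0,1}" "\<alpha> \<noteq> \<beta>"
    and patch: "\<And>x. reached x \<Longrightarrow> (x, 2, Z x) \<in> trans B \<and> (Z x, lt x, x) \<in> trans B \<and> lt x \<in> {0,1,2} \<and> lt x \<noteq> \<alpha>"
  shows False
proof -
  define w1 where "w1 = (\<lambda>i::nat. if even i then \<alpha> else \<beta>)"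
  have w1: "w1 \<in> omega_words {0,1,2}" using alt_omega[OF ab(1,2)] w1_def by simp
  have inf: "infab w1" "infba w1" using alt_inf[OF ab] w1_def by auto
  define \<rho> where "\<rho> = rr w1"
  have run: "is_run B w1 \<rho>" using rr_run[OF w1] \<rho>_def by simp
  have acc: "accepting_run gen_buchi_acc B \<rho>" using rr_acc[OF w1 inf] \<rho>_def by simp
  define X where "X = (\<lambda>k. snd (snd (\<rho> (2*k))))"
  have reX: "reached (X k)" for k using rr_reached[OF w1] X_def \<rho>_def by simp
  define Zk where "Zk = (\<lambda>k. Z (X k))"
  define lk where "lk = (\<lambda>k. lt (X k))"
  have p: "(snd (snd (\<rho> (2*k))), 2, Zk k) \<in> trans B \<and> (Zk k, lk k, snd (snd (\<rho> (2*k)))) \<in> trans B" for k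
    using patch[OF reX[of k]] unfolding Zk_def lk_def X_def by simp
  have run2: "is_run B (ins_w \<alpha> \<beta> lk) (ins_r \<rho> Zk lk)"
    by (rule ins_run[OF _ run p]) (simp add: w1_def)
  have acc2: "accepting_run gen_buchi_acc B (ins_r \<rho> Zk lk)" using ins_acc[OF acc] .
  have lk3: "lk k \<in> {0,1,2}" for k using patch[OF reX[of k]] lk_def by simp
  have "ins_w \<alpha> \<beta> lk n \<in> {0,1,2}" for n
  proof (rule four_cases[of _ n])
    fix k
    show "ins_w \<alpha> \<beta> lk (4*k) \<in> {0,1,2}" unfolding iw0 using ab(1) by blast
    show "ins_w \<alpha> \<beta> lk (4*k+1) \<in> {0,1,2}" unfolding iw1 by blast
    show "ins_w \<alpha> \<beta> lk (4*k+2) \<in> {0,1,2}" unfolding iw2 using lk3 by blast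
    show "ins_w \<alpha> \<beta> lk (4*k+3) \<in> {0,1,2}" unfolding iw3 using ab(2) by blast
  qed
  then have om: "ins_w \<alpha> \<beta> lk \<in> omega_words {0,1,2}" unfolding omega_words_def by blast
  have both: "infab (ins_w \<alpha> \<beta> lk) \<and> infba (ins_w \<alpha> \<beta> lk)" using B_sound[OF om run2 acc2] .
  have "\<exists>i. ins_w \<alpha> \<beta> lk i = \<alpha> \<and> ins_w \<alpha> \<beta> lk (Suc i) = \<beta>"
  proof (cases "\<alpha> = 0")
    case True
    then have "\<beta> = 1" using ab by auto
    then show ?thesis using True both unfolding infab_def by blast
  next
    case False
    then have "\<alpha> = 1" "\<beta> = 0" using ab by auto
    then show ?thesis using both unfolding infba_def by blast
  qed
  then obtain i where i: "ins_w \<alpha> \<beta> lk i = \<alpha> \<and> ins_w \<alpha> \<beta> lk (Suc i) = \<beta>" by blast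
  have "lk k \<noteq> \<alpha>" for k using patch[OF reX[of k]] lk_def by simp
  moreover have "\<alpha> \<noteq> 2" "\<beta> \<noteq> 2" using ab by auto
  ultimately show False using ins_nopat[of \<alpha> \<beta> lk i] ab(3) i by blast
qed


lemma loop_contra:
  assumes rq: "reached q'" and c2: "(q',2,q') \<in> trans B"
    and loop: "\<And>x z. (q',x,z) \<in> trans B \<Longrightarrow> z = q'"
  shows False
proof -
  obtain zs where zs: "set zs \<subseteq> {0,1,2}" "q' = after zs" using rq unfolding reached_def by blast
  define n where "n = length zs"
  define w1 where "w1 = (\<lambda>i. if i < n then zs ! i else if even (i - n) then 0 else (1::nat))"
  have zsi: "i < n \<Longrightarrow> zs ! i \<in> {0,1,2}" for i using subsetD[OF zs(1) nth_mem[of i zs]] n_def by simp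
  have "w1 i \<in> {0,1,2}" for i using zsi[of i] unfolding w1_def by (cases "i < n") auto
  then have w1o: "w1 \<in> omega_words {0,1,2}" unfolding omega_words_def by blast
  have ab1: "infab w1" unfolding infab_def
  proof
    fix N show "\<exists>i\<ge>N. w1 i = 0 \<and> w1 (Suc i) = 1"
      by (rule exI[of _ "n + 2*N"]) (simp add: w1_def Suc_diff_le)
  qed
  have ba1: "infba w1" unfolding infba_def
  proof
    fix N show "\<exists>i\<ge>N. w1 i = 1 \<and> w1 (Suc i) = 0"
      by (rule exI[of _ "n + 2*N + 1"]) (simp add: w1_def Suc_diff_le)
  qed
  define \<rho> where "\<rho> = rr w1"
  have run: "is_run B w1 \<rho>" using rr_run[OF w1o] \<rho>_def by simp
  have acc: "accepting_run gen_buchi_acc B \<rho>" using rr_acc[OF w1o ab1 ba1] \<rho>_def by simp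
  have rt: "\<rho> i \<in> trans B" "fst (snd (\<rho> i)) = w1 i" "snd (snd (\<rho> i)) = fst (\<rho> (Suc i))"
    "fst (\<rho> 0) = initial B" for i
    using run unfolding is_run_def by auto
  have mapz: "map w1 [0..<n] = zs" by (rule nth_equalityI) (auto simp: w1_def n_def)
  have fn: "fst (\<rho> n) = q'" using rr_after[OF w1o, of n] mapz zs(2) \<rho>_def by simp
  have stay: "fst (\<rho> (n+m)) = q'" for m
  proof (induction m)
    case 0 then show ?case using fn by simp
  next
    case (Suc m)
    have "\<rho> (n+m) = (fst (\<rho> (n+m)), w1 (n+m), snd (snd (\<rho> (n+m))))" using run_parts'[OF run] .
    then have "(q', w1 (n+m), snd (snd (\<rho> (n+m)))) \<in> trans B" using rt(1)[of "n+m"] Suc.IH by simp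
    then have "snd (snd (\<rho> (n+m))) = q'" by (rule loop)
    then show ?case using rt(3)[of "n+m"] by simp
  qed
  have rform: "i \<ge> n \<Longrightarrow> \<rho> i = (q', w1 i, q')" for i
  proof -
    assume "i \<ge> n"
    then obtain m where m: "i = n + m" using le_Suc_ex by blast
    have "\<rho> i = (fst (\<rho> i), w1 i, snd (snd (\<rho> i)))" using run_parts'[OF run] .
    moreover have "fst (\<rho> i) = q'" using stay m by simp
    moreover have "snd (snd (\<rho> i)) = q'" using rt(3)[of i] stay[of "Suc m"] m by simp
    ultimately show ?thesis by simp
  qed
  have hasx: "x \<in> {0,1,2} \<Longrightarrow> (q',x,q') \<in> trans B" for x
  proof -
    assume "x \<in> {0,1,2}"
    then obtain z where "(q',x,z) \<in> trans B" using reached_step[OF rq] by blast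
    moreover then have "z = q'" by (rule loop)
    ultimately show ?thesis by simp
  qed
  define w2 where "w2 = (\<lambda>i. if i < n then zs ! i else (i - n) mod 3)"
  define \<rho>2 where "\<rho>2 = (\<lambda>i. if i < n then \<rho> i else (q', w2 i, q'))"
  have m3: "(k::nat) mod 3 \<in> {0,1,2}" for k by auto
  have "w2 i \<in> {0,1,2}" for i using zsi[of i] m3[of "i-n"] unfolding w2_def by (cases "i < n") auto
  then have w2o: "w2 \<in> omega_words {0,1,2}" unfolding omega_words_def by blast
  have run2: "is_run B w2 \<rho>2"
    unfolding is_run_def
  proof (intro conjI allI)
    fix i
    show "\<rho>2 i \<in> trans B"
    proof (cases "i < n")
      case True then show ?thesis using rt(1) \<rho>2_def by simp
    next
      case False then show ?thesis using hasx[OF m3[of "i-n"]] \<rho>2_def w2_def by simp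
    qed
    show "fst (snd (\<rho>2 i)) = w2 i"
      using rt(2)[of i] by (simp add: \<rho>2_def w2_def w1_def)
    show "snd (snd (\<rho>2 i)) = fst (\<rho>2 (Suc i))"
    proof (cases "Suc i < n")
      case True then show ?thesis using rt(3)[of i] \<rho>2_def by simp
    next
      case False
      show ?thesis
      proof (cases "i < n")
        case True
        then have "Suc i = n" using False by simp
        then have "fst (\<rho> (Suc i)) = q'" using fn by simp
        then show ?thesis using True False rt(3)[of i] \<rho>2_def by simp
      next
        case False2: False
        then show ?thesis using False \<rho>2_def by simp
      qed
    qed
  next
    show "fst (\<rho>2 0) = initial B"
    proof (cases "n = 0")
      case True
      then have "zs = []" using n_def by simp
      then show ?thesis using True zs(2) \<rho>2_def after_def by simp
    next
      case False then show ?thesis using rt(4) \<rho>2_def by simp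
    qed
  qed
  have acc2: "accepting_run gen_buchi_acc B \<rho>2"
    unfolding accepting_run_def gen_buchi_acc_def
  proof
    fix c assume c: "c \<in> colours B"
    have "\<exists>\<^sub>\<infinity>i. c \<in> col B (\<rho> i)" using acc c unfolding accepting_run_def gen_buchi_acc_def by blast
    then have inf: "\<forall>m. \<exists>i\<ge>m. c \<in> col B (\<rho> i)" unfolding INFM_nat_le .
    have "\<forall>m. \<exists>j\<ge>m. c \<in> col B (\<rho>2 j)"
    proof
      fix m
      obtain i where i: "i \<ge> m + n" "c \<in> col B (\<rho> i)" using inf by blast
      define a where "a = (if even (i - n) then 0 else (1::nat))"
      define j where "j = n + 3 * (i - n) + a"
      have a3: "a < 3" unfolding a_def by simp
      have inn: "n \<le> i" using i(1) by linarith
      have jm: "j \<ge> m" using i(1) unfolding j_def by linarith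
      have njn: "\<not> j < n" unfolding j_def by linarith
      have jmod: "(j - n) mod 3 = a" unfolding j_def using a3 by simp
      have w2j: "w2 j = a" using njn jmod unfolding w2_def by simp
      have w1i: "w1 i = a" using inn unfolding w1_def a_def by simp
      have rhi: "\<rho> i = (q', a, q')" using rform[OF inn] w1i by simp
      have r2: "\<rho>2 j = \<rho> i" using njn w2j rhi unfolding \<rho>2_def by simp
      show "\<exists>j\<ge>m. c \<in> col B (\<rho>2 j)"
        by (rule exI[of _ j]) (simp only: jm r2 i(2) simp_thms)
    qed
    then show "\<exists>\<^sub>\<infinity>i. c \<in> col B (\<rho>2 i)" unfolding INFM_nat_le .
  qed
  have "infba w2" using B_sound[OF w2o run2 acc2] by blast
  then obtain i where i: "i \<ge> n" "w2 i = 1" "w2 (Suc i) = 0" unfolding infba_def by blast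
  then have "(i - n) mod 3 = 1" using w2_def by simp
  moreover have "(Suc i - n) mod 3 = 0" using i w2_def by simp
  moreover have "Suc i - n = Suc (i - n)" using i(1) by simp
  ultimately have "(i - n) mod 3 = 1" "Suc (i - n) mod 3 = 0" by simp_all
  then show False by (simp add: mod_Suc)
qed

lemma lower:
  assumes card: "card (states B) \<le> 2"
  shows False
proof (cases "\<forall>q. reached q \<longrightarrow> (\<exists>z. (q,2,z) \<in> trans B \<and> (z,2,q) \<in> trans B)")
  case True
  define Z where "Z = (\<lambda>x. SOME z. (x,2,z) \<in> trans B \<and> (z,2,x) \<in> trans B)"
  show False
  proof (rule ins_contra[of 0 1 Z "\<lambda>_. 2"])
    fix x assume "reached x"
    then have "\<exists>z. (x,2,z) \<in> trans B \<and> (z,2,x) \<in> trans B" using True by blast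
    then have "(x,2,Z x) \<in> trans B \<and> (Z x,2,x) \<in> trans B" unfolding Z_def by (rule someI_ex)
    then show "(x, 2, Z x) \<in> trans B \<and> (Z x, 2, x) \<in> trans B \<and> (2::nat) \<in> {0,1,2} \<and> (2::nat) \<noteq> 0" by simp
  qed auto
next
  case False
  then obtain q where rq: "reached q" and ncc: "\<not> (\<exists>z. (q,2,z) \<in> trans B \<and> (z,2,q) \<in> trans B)" by blast
  obtain q' where qq': "(q,2,q') \<in> trans B" and rq': "reached q'" using reached_step[OF rq] by auto
  have neq: "q \<noteq> q'" using ncc qq' by blast
  obtain z where qz: "(q',2,z) \<in> trans B" and rz: "reached z" using reached_step[OF rq'] by auto
  have fin: "finite (states B)" using wfB unfolding wf_automaton_def by blast
  have st: "states B = {q,q'}" using card2_eq[OF fin card reached_states[OF rq] reached_states[OF rq'] neq] .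
  have trs: "t \<in> trans B \<Longrightarrow> fst t \<in> states B \<and> fst (snd t) \<in> {0,1,2} \<and> snd (snd t) \<in> states B" for t
  proof -
    assume t: "t \<in> trans B"
    have tsub: "trans B \<subseteq> states B \<times> alphabet B \<times> states B" using wfB unfolding wf_automaton_def by blast
    have "t \<in> states B \<times> alphabet B \<times> states B" using subsetD[OF tsub t] .
    then show ?thesis unfolding mem_Times_iff alB by blast
  qed
  have "z \<in> {q,q'}" using trs[OF qz] st by simp
  moreover have "z \<noteq> q" using ncc qq' qz by blast
  ultimately have c2: "(q',2,q') \<in> trans B" using qz by auto
  have rall: "reached x \<Longrightarrow> x = q \<or> x = q'" for x using reached_states[of x] st by auto
  show False
  proof (cases "(q',1,q) \<in> trans B")
    case True
    show False
    proof (rule ins_contra[of 0 1 "\<lambda>_. q'" "\<lambda>x. if x = q then 1 else 2"])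
      fix x assume "reached x"
      then have "x = q \<or> x = q'" by (rule rall)
      then show "(x, 2, q') \<in> trans B \<and> (q', if x = q then 1 else 2, x) \<in> trans B \<and>
          (if x = q then 1 else 2) \<in> {0,1,2} \<and> (if x = q then 1 else (2::nat)) \<noteq> 0"
        using True qq' c2 neq by auto
    qed auto
  next
    case F1: False
    show False
    proof (cases "(q',0,q) \<in> trans B")
      case True
      show False
      proof (rule ins_contra[of 1 0 "\<lambda>_. q'" "\<lambda>x. if x = q then 0 else 2"])
        fix x assume "reached x"
        then have "x = q \<or> x = q'" by (rule rall)
        then show "(x, 2, q') \<in> trans B \<and> (q', if x = q then 0 else 2, x) \<in> trans B \<and>
            (if x = q then 0 else 2) \<in> {0,1,2} \<and> (if x = q then 0 else (2::nat)) \<noteq> 1"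
          using True qq' c2 neq by auto
      qed auto
    next
      case F0: False
      show False
      proof (rule loop_contra[OF rq' c2])
        fix x y assume t: "(q',x,y) \<in> trans B"
        have "y \<in> {q,q'}" "x \<in> {0,1,2}" using trs[OF t] st by auto
        moreover have "y \<noteq> q"
        proof
          assume "y = q"
          then have "(q',x,q) \<in> trans B" using t by simp
          then show False using F0 F1 ncc qq' \<open>x \<in> {0,1,2}\<close> by auto
        qed
        ultimately show "y = q'" by auto
      qed
    qed
  qed
qed

end


theorem lemma6:
  shows "\<exists>(A :: (nat, nat, nat) automaton).
           wf_automaton A \<and> history_deterministic gen_cobuchi_acc A \<and>
           (\<forall>(B :: (nat, nat, nat) automaton).
              wf_automaton B \<and> alphabet B = alphabet A \<and>
              history_deterministic gen_buchi_acc B \<and>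
              lang gen_buchi_acc B = omega_words (alphabet A) - lang gen_cobuchi_acc A
              \<longrightarrow> card (states B) > card (states A))"
proof -
  have "\<forall>(B :: (nat, nat, nat) automaton).
              wf_automaton B \<and> alphabet B = alphabet AutA \<and>
              history_deterministic gen_buchi_acc B \<and>
              lang gen_buchi_acc B = omega_words (alphabet AutA) - lang gen_cobuchi_acc AutA
              \<longrightarrow> card (states B) > card (states AutA)"
  proof (intro allI impI)
    fix B :: "(nat, nat, nat) automaton"
    assume h: "wf_automaton B \<and> alphabet B = alphabet AutA \<and>
              history_deterministic gen_buchi_acc B \<and>
              lang gen_buchi_acc B = omega_words (alphabet AutA) - lang gen_cobuchi_acc AutA"
    then obtain \<sigma> where res: "is_resolver gen_buchi_acc B \<sigma>"
      unfolding history_deterministic_def by blast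
    have wf: "wf_automaton B" using h by blast
    have alB: "alphabet B = {0,1,2}" using h by simp
    have "lang gen_buchi_acc B = omega_words {0,1,2} - lang gen_cobuchi_acc AutA" using h by simp
    then have langB: "lang gen_buchi_acc B = {w \<in> omega_words {0,1,2}. infab w \<and> infba w}"
      unfolding langA by blast
    show "card (states B) > card (states AutA)"
    proof (rule ccontr)
      assume "\<not> card (states B) > card (states AutA)"
      then have "card (states B) \<le> 2" by simp
      then show False using lower[OF wf alB res langB] by blast
    qed
  qed
  then show ?thesis using A_wf A_hd by blast
qed

end
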